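(* For all integers $n\ge 2$ and $M\ge 1$, $C_{AD}(n,M)\le C_{CD}(n,M)\le (n-1)\log_2 M$.
   Context: There are $n$ nodes labeled $1,\dots,n$; node $i$ privately holds an input $x_i\in\{1,\dots,M\}$. Communication is over private point-to-point links of a fully connected synchronous network. A deterministic protocol $P$ is a fixed finite schedule of steps $l=1,\dots,L(P)$; in step $l$ a prescribed node $T_l$ sends to a prescribed node $R_l\neq T_l$ one symbol $f_l(x_{T_l},T_l^+(l))$, where $T_l^+(l)$ is the sequence of symbols $T_l$ has received in steps $1,\dots,l-1$; only $R_l$ receives it. Its complexity is $C(P)=\sum_{l}\log_2 S_l(P)$, with $S_l(P)$ the number of distinct values of the step-$l$ symbol over all inputs in $\{1,\dots,M\}^n$. At the end each node $i$ outputs a bit $EQ_i$ depending on $x_i$ and the symbols it received. $P$ solves MEQ-AD$(n,M)$ if for every input, $EQ_1=\cdots=EQ_n=0$ iff $x_1=\cdots=x_n$; $P$ solves MEQ-CD$(n,M)$ if for every input, $EQ_n=0$ iff $x_1=\cdots=x_n$. $C_{AD}(n,M)$ and $C_{CD}(n,M)$ are the infima of $C(P)$ over protocols solving MEQ-AD$(n,M)$, respectively MEQ-CD$(n,M)$. *)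

theory Defs
  imports Complex_Main "HOL-Library.FuncSet"
begin

text \<open>Steps are indexed 0..<len (step l here is
step l+1 of the paper). Symbols are natural numbers (any countable alphabet suffices).
tx l / rx l are the sender / receiver of step l, msg l v r is the symbol sent in step l
by a sender with input v having received the symbol sequence r so far, and
out i v r is the output bit EQ_i of node i with input v and received sequence r
(False = 0, True = 1).\<close>

record protocol =
  len :: nat
  tx  :: "nat \<Rightarrow> nat"
  rx  :: "nat \<Rightarrow> nat"
  msg :: "nat \<Rightarrow> nat \<Rightarrow> nat list \<Rightarrow> nat"
  out :: "nat \<Rightarrow> nat \<Rightarrow> nat list \<Rightarrow> bool"

definition wf_protocol :: "nat \<Rightarrow> protocol \<Rightarrow> bool" where
  "wf_protocol n P \<longleftrightarrow>
     (\<forall>l < len P. tx P l \<in> {1..n} \<and> rx P l \<in> {1..n} \<and> tx P l \<noteq> rx P l)"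

fun syms :: "protocol \<Rightarrow> (nat \<Rightarrow> nat) \<Rightarrow> nat \<Rightarrow> nat list" where
  "syms P x 0 = []"
| "syms P x (Suc l) =
     syms P x l @
     [msg P l (x (tx P l))
        (map (\<lambda>k. syms P x l ! k) (filter (\<lambda>k. rx P k = tx P l) [0..<l]))]"

definition received :: "protocol \<Rightarrow> (nat \<Rightarrow> nat) \<Rightarrow> nat \<Rightarrow> nat \<Rightarrow> nat list" where
  "received P x i l = map (\<lambda>k. syms P x l ! k) (filter (\<lambda>k. rx P k = i) [0..<l])"

definition sym :: "protocol \<Rightarrow> (nat \<Rightarrow> nat) \<Rightarrow> nat \<Rightarrow> nat" where
  "sym P x l = syms P x (Suc l) ! l"

definition EQ :: "protocol \<Rightarrow> (nat \<Rightarrow> nat) \<Rightarrow> nat \<Rightarrow> bool" where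
  "EQ P x i = out P i (x i) (received P x i (len P))"

definition inputs :: "nat \<Rightarrow> nat \<Rightarrow> (nat \<Rightarrow> nat) set" where
  "inputs n M = Pi\<^sub>E {1..n} (\<lambda>_. {1..M})"

definition num_vals :: "nat \<Rightarrow> nat \<Rightarrow> protocol \<Rightarrow> nat \<Rightarrow> nat" where
  "num_vals n M P l = card ((\<lambda>x. sym P x l) ` inputs n M)"

definition cost :: "nat \<Rightarrow> nat \<Rightarrow> protocol \<Rightarrow> real" where
  "cost n M P = (\<Sum>l<len P. log 2 (real (num_vals n M P l)))"

definition all_equal :: "nat \<Rightarrow> (nat \<Rightarrow> nat) \<Rightarrow> bool" where
  "all_equal n x \<longleftrightarrow> (\<forall>i\<in>{1..n}. \<forall>j\<in>{1..n}. x i = x j)"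

definition solves_AD :: "nat \<Rightarrow> nat \<Rightarrow> protocol \<Rightarrow> bool" where
  "solves_AD n M P \<longleftrightarrow> wf_protocol n P \<and>
     (\<forall>x\<in>inputs n M. (\<forall>i\<in>{1..n}. \<not> EQ P x i) \<longleftrightarrow> all_equal n x)"

definition solves_CD :: "nat \<Rightarrow> nat \<Rightarrow> protocol \<Rightarrow> bool" where
  "solves_CD n M P \<longleftrightarrow> wf_protocol n P \<and>
     (\<forall>x\<in>inputs n M. \<not> EQ P x n \<longleftrightarrow> all_equal n x)"

definition C_AD :: "nat \<Rightarrow> nat \<Rightarrow> real" where
  "C_AD n M = Inf (cost n M ` {P. solves_AD n M P})"

definition C_CD :: "nat \<Rightarrow> nat \<Rightarrow> real" where
  "C_CD n M = Inf (cost n M ` {P. solves_CD n M P})"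

end

theory Submission
  imports Defs
begin

lemma inputs_fin: "finite (inputs n M)"
  unfolding inputs_def by (simp add: finite_PiE)

lemma inputs_ne: "M \<ge> 1 \<Longrightarrow> (\<lambda>i\<in>{1..n}. 1) \<in> inputs n M"
  unfolding inputs_def by auto

lemma cost_nonneg: assumes "M \<ge> 1" shows "cost n M P \<ge> 0"
  unfolding cost_def
proof (rule sum_nonneg)
  fix l
  have "(\<lambda>x. sym P x l) ` inputs n M \<noteq> {}" using inputs_ne[OF assms] by blast
  moreover have "finite ((\<lambda>x. sym P x l) ` inputs n M)" using inputs_fin by simp
  ultimately have "num_vals n M P l \<ge> 1" unfolding num_vals_def
    by (simp add: Suc_leI card_gt_0_iff)
  then show "0 \<le> log 2 (real (num_vals n M P l))" by simp
qed

lemma syms_out: "syms (P\<lparr>out := f\<rparr>) x l = syms P x l"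
  by (induction l) simp_all

definition toAD :: "nat \<Rightarrow> protocol \<Rightarrow> protocol" where
  "toAD n P = P\<lparr>out := (\<lambda>i v r. if i = n then out P i v r else False)\<rparr>"

lemma toAD_cost: "cost n M (toAD n P) = cost n M P"
  unfolding cost_def num_vals_def sym_def toAD_def by (simp add: syms_out)

lemma toAD_solves: assumes "n \<ge> 1" "solves_CD n M P" shows "solves_AD n M (toAD n P)"
proof -
  have eq: "EQ (toAD n P) x i = (if i = n then EQ P x i else False)" for x i
    unfolding EQ_def received_def toAD_def by (simp add: syms_out)
  have "(\<forall>i\<in>{1..n}. \<not> EQ (toAD n P) x i) \<longleftrightarrow> \<not> EQ P x n" for x
    using assms(1) by (auto simp: eq)
  moreover have "wf_protocol n (toAD n P)" using assms(2)
    unfolding solves_CD_def wf_protocol_def toAD_def by simp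
  ultimately show ?thesis using assms(2) unfolding solves_AD_def solves_CD_def by simp
qed

definition triv :: "nat \<Rightarrow> protocol" where
  "triv n = \<lparr>len = n - 1, tx = (\<lambda>l. l + 1), rx = (\<lambda>_. n),
     msg = (\<lambda>l v r. v), out = (\<lambda>i v r. \<exists>k<length r. r ! k \<noteq> v)\<rparr>"

lemma triv_sel[simp]: "len (triv n) = n - 1" "tx (triv n) = (\<lambda>l. l + 1)" "rx (triv n) = (\<lambda>_. n)"
  "msg (triv n) = (\<lambda>l v r. v)" "out (triv n) = (\<lambda>i v r. \<exists>k<length r. r ! k \<noteq> v)"
  by (simp_all add: triv_def)

lemma triv_syms: "syms (triv n) x l = map (\<lambda>k. x (k + 1)) [0..<l]"
  by (induction l) simp_all

lemma triv_sym: "sym (triv n) x l = x (l + 1)"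
  unfolding sym_def by (simp add: triv_syms del: upt_Suc add: nth_append)

lemma triv_EQ: "EQ (triv n) x n = (\<exists>k<n - 1. x (k + 1) \<noteq> x n)"
proof -
  have "received (triv n) x n (n - 1) = map (\<lambda>k. x (k + 1)) [0..<n - 1]"
    unfolding received_def triv_syms by simp
  then show ?thesis unfolding EQ_def by auto
qed

lemma triv_solves: assumes "n \<ge> 2" shows "solves_CD n M (triv n)"
proof -
  have wf: "wf_protocol n (triv n)" unfolding wf_protocol_def using assms by auto
  have "(\<not> (\<exists>k<n - 1. x (k + 1) \<noteq> x n)) \<longleftrightarrow> all_equal n x" for x
  proof
    assume h: "\<not> (\<exists>k<n - 1. x (k + 1) \<noteq> x n)"
    have "x i = x n" if "i \<in> {1..n}" for i
    proof (cases "i = n")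
      case False
      then have "i - 1 < n - 1" "i - 1 + 1 = i" using that by auto
      moreover have "x (i - 1 + 1) = x n" using h calculation(1) by blast
      ultimately show ?thesis by simp
    qed simp
    then show "all_equal n x" unfolding all_equal_def by (metis (no_types, lifting))
  next
    assume "all_equal n x"
    then show "\<not> (\<exists>k<n - 1. x (k + 1) \<noteq> x n)"
    proof (intro notI, elim exE conjE)
      fix k assume k: "k < n - 1" "x (k + 1) \<noteq> x n"
      have "k + 1 \<in> {1..n}" "n \<in> {1..n}" using k(1) assms by auto
      then show False using k(2) \<open>all_equal n x\<close> unfolding all_equal_def by blast
    qed
  qed
  then show ?thesis using wf unfolding solves_CD_def by (simp add: triv_EQ)
qed

lemma triv_cost: assumes "M \<ge> 1" shows "cost n M (triv n) = real (n - 1) * log 2 (real M)"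
proof -
  have "num_vals n M (triv n) l = M" if "l < n - 1" for l
  proof -
    have "(\<lambda>x. sym (triv n) x l) ` inputs n M = {1..M}"
    proof
      show "(\<lambda>x. sym (triv n) x l) ` inputs n M \<subseteq> {1..M}"
        using that by (auto simp: triv_sym inputs_def PiE_iff)
      show "{1..M} \<subseteq> (\<lambda>x. sym (triv n) x l) ` inputs n M"
      proof
        fix v assume v: "v \<in> {1..M}"
        have "(\<lambda>i\<in>{1..n}. v) \<in> inputs n M" using v by (auto simp: inputs_def)
        moreover have "sym (triv n) (\<lambda>i\<in>{1..n}. v) l = v"
        proof -
          have "l + 1 \<in> {1..n}" using that by auto
          then show ?thesis by (simp add: triv_sym)
        qed
        moreover have "v = sym (triv n) (\<lambda>i\<in>{1..n}. v) l" using calculation(2) by simp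
        ultimately show "v \<in> (\<lambda>x. sym (triv n) x l) ` inputs n M" by blast
      qed
    qed
    then show ?thesis unfolding num_vals_def by simp
  qed
  then have "(\<Sum>l<len (triv n). log 2 (real (num_vals n M (triv n) l))) = (\<Sum>l<n - 1. log 2 (real M))"
    by (intro sum.cong) auto
  then show ?thesis unfolding cost_def by simp
qed

theorem mainTheorem5:
  fixes n M :: nat
  assumes "n \<ge> 2" and "M \<ge> 1"
  shows "C_AD n M \<le> C_CD n M \<and> C_CD n M \<le> real (n - 1) * log 2 (real M)"
proof
  have bdd: "bdd_below (cost n M ` S)" for S
    by (rule bdd_belowI[of _ 0]) (use cost_nonneg[OF assms(2)] in blast)
  have ne: "cost n M ` {P. solves_CD n M P} \<noteq> {}" using triv_solves[OF assms(1)] by blast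
  show "C_AD n M \<le> C_CD n M"
    unfolding C_AD_def C_CD_def
  proof (rule cInf_mono[OF ne bdd])
    fix b assume "b \<in> cost n M ` {P. solves_CD n M P}"
    then obtain P where P: "solves_CD n M P" "b = cost n M P" by blast
    have "n \<ge> 1" using assms(1) by linarith
    then have "toAD n P \<in> {P. solves_AD n M P}" using toAD_solves[of n M P] P(1) by blast
    then have "cost n M (toAD n P) \<in> cost n M ` {P. solves_AD n M P}" by blast
    then show "\<exists>a\<in>cost n M ` {P. solves_AD n M P}. a \<le> b"
      using toAD_cost[of n M P] P(2) by (metis order_refl)
  qed
  show "C_CD n M \<le> real (n - 1) * log 2 (real M)"
  proof -
    have "cost n M (triv n) \<in> cost n M ` {P. solves_CD n M P}"
      using triv_solves[OF assms(1)] by blast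
    then have "Inf (cost n M ` {P. solves_CD n M P}) \<le> cost n M (triv n)"
      by (rule cInf_lower[OF _ bdd])
    then show ?thesis unfolding C_CD_def using triv_cost[OF assms(2)] by (metis (no_types))
  qed
qed

end
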